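(* Let $\mathbb{G}$ be a Carnot group of step 2 equipped with a strongly homogeneous norm $\|\cdot\|$, and let $K:\mathbb{G}\setminus\{\mathbf0\}\to\mathbb{R}^d$ be a $(Q-1)$-dimensional Calderón–Zygmund kernel with parameters $\beta$ and $\kappa$. Then there exists $C\ge1$ depending on $\kappa$ and $\beta$ such that $$|K(q^{-1}\cdot p_1)-K(q^{-1}\cdot p_2)|+|K(p_1^{-1}\cdot q)-K(p_2^{-1}\cdot q)|\lesssim\frac{\|p_2^{-1}\cdot p_1\|^{\beta/2}}{\|q^{-1}\cdot p_1\|^{Q-1+\beta/2}}$$ for all $q\in\mathbb{G}$ and $p_1,p_2\in\mathbb{G}\setminus\{q\}$ with $d(p_1,p_2)\le d(p_1,q)/C$.
   Context: Step-2 Carnot group: $\mathbb{G}\cong\mathfrak v_1\oplus\mathfrak v_2\cong\mathbb{R}^N$ in exponential coordinates, $(x,z)\cdot(x',z')=(x+x',z+z'+\tfrac12[x,x'])$, $[\mathfrak v_1,\mathfrak v_1]=\mathfrak v_2$, $\delta_t(x,z)=(tx,t^2z)$, $Q=\dim\mathfrak v_1+2\dim\mathfrak v_2$. Strongly homogeneous norm: continuous, $\|\delta_tp\|=|t|\|p\|$ for $t\in\mathbb{R}$, $\|p\|=0$ iff $p=\mathbf0$; $d(p,q)=\|q^{-1}p\|$. $K$ continuous is a $(Q-1)$-dimensional Calderón–Zygmund kernel with parameters $\kappa\in(0,1)$, $\beta\in(0,1]$ if there is $C_K\ge1$ with $|K(p)|\le C_K\|p\|^{1-Q}$ for $p\ne\mathbf0$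 and $|K(p_1)-K(p_2)|\le C_K\|p_2^{-1}p_1\|^\beta/\|p_1\|^{Q-1+\beta}$ whenever $p_1,p_2\ne\mathbf0$, $d(p_1,p_2)\le\kappa\|p_1\|$. The implicit constant in $\lesssim$ is independent of $q,p_1,p_2$. *)

theory Defs
  imports "HOL-Analysis.Analysis"
begin

text \<open>Step-2 Carnot group in exponential coordinates: points are pairs (x,z) with
x in the first layer V1 = real^'m and z in the second layer V2 = real^'n; the Lie
bracket restricted to V1 is a skew-symmetric bilinear map B : V1 x V1 -> V2.\<close>

type_synonym ('m, 'n) cpt = "(real^'m) \<times> (real^'n)"

definition step2_bracket :: "(real^'m::finite \<Rightarrow> real^'m \<Rightarrow> real^'n::finite) \<Rightarrow> bool" where
  "step2_bracket B \<longleftrightarrow> bilinear B \<and> (\<forall>x y. B x y = - B y x)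
     \<and> span {B x y | x y. True} = UNIV"

definition gmul :: "(real^'m::finite \<Rightarrow> real^'m \<Rightarrow> real^'n::finite) \<Rightarrow> ('m,'n) cpt \<Rightarrow> ('m,'n) cpt \<Rightarrow> ('m,'n) cpt" where
  "gmul B p p' = (fst p + fst p', snd p + snd p' + (1/2) *\<^sub>R B (fst p) (fst p'))"

definition ginv :: "('m::finite,'n::finite) cpt \<Rightarrow> ('m,'n) cpt" where
  "ginv p = (- fst p, - snd p)"

definition dil :: "real \<Rightarrow> ('m::finite,'n::finite) cpt \<Rightarrow> ('m,'n) cpt" where
  "dil t p = (t *\<^sub>R fst p, (t^2) *\<^sub>R snd p)"

definition hdim :: "('m::finite,'n::finite) cpt itself \<Rightarrow> real" where
  "hdim _ = real CARD('m) + 2 * real CARD('n)"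

definition strongly_homogeneous_norm :: "(('m::finite,'n::finite) cpt \<Rightarrow> real) \<Rightarrow> bool" where
  "strongly_homogeneous_norm nrm \<longleftrightarrow> continuous_on UNIV nrm
     \<and> (\<forall>p. 0 \<le> nrm p)
     \<and> (\<forall>t p. nrm (dil t p) = \<bar>t\<bar> * nrm p)
     \<and> (\<forall>p. nrm p = 0 \<longleftrightarrow> p = 0)"

definition cdist :: "(real^'m::finite \<Rightarrow> real^'m \<Rightarrow> real^'n::finite) \<Rightarrow> (('m,'n) cpt \<Rightarrow> real)
    \<Rightarrow> ('m,'n) cpt \<Rightarrow> ('m,'n) cpt \<Rightarrow> real" where
  "cdist B nrm p q = nrm (gmul B (ginv q) p)"

definition CZ_kernel :: "(real^'m::finite \<Rightarrow> real^'m \<Rightarrow> real^'n::finite) \<Rightarrow> (('m,'n) cpt \<Rightarrow> real) \<Rightarrow> real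
    \<Rightarrow> real \<Rightarrow> real \<Rightarrow> (('m,'n) cpt \<Rightarrow> real^'d::finite) \<Rightarrow> bool" where
  "CZ_kernel B nrm Q \<kappa> \<beta> K \<longleftrightarrow>
     continuous_on (UNIV - {0}) K \<and> 0 < \<kappa> \<and> \<kappa> < 1 \<and> 0 < \<beta> \<and> \<beta> \<le> 1 \<and>
     (\<exists>CK\<ge>1.
        (\<forall>p. p \<noteq> 0 \<longrightarrow> norm (K p) \<le> CK * nrm p powr (1 - Q)) \<and>
        (\<forall>p1 p2. p1 \<noteq> 0 \<and> p2 \<noteq> 0 \<and> cdist B nrm p1 p2 \<le> \<kappa> * nrm p1 \<longrightarrow>
           norm (K p1 - K p2) \<le> CK * nrm (gmul B (ginv p2) p1) powr \<beta> / nrm p1 powr (Q - 1 + \<beta>)))"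

end

theory Submission imports Defs begin

definition GG :: "('m::finite,'n::finite) cpt \<Rightarrow> real" where
  "GG p = sqrt (norm (fst p) ^ 4 + norm (snd p) ^ 2)"

lemma GG_fst: "norm (fst p) ^ 2 \<le> GG p"
  unfolding GG_def by (rule real_le_rsqrt) (simp add: power_mult[symmetric, of _ 2 2, simplified])

lemma GG_snd: "norm (snd p) \<le> GG p"
  unfolding GG_def by (rule real_le_rsqrt) simp

lemma GG_nonneg: "0 \<le> GG p" unfolding GG_def by simp

lemma GG_zero: "GG p = 0 \<longleftrightarrow> p = 0"
  unfolding GG_def by (cases p) (auto simp: add_nonneg_eq_0_iff zero_prod_def)

lemma GG_dil: "GG (dil t p) = t^2 * GG p"
proof -
  have "norm (fst (dil t p)) ^ 4 + norm (snd (dil t p)) ^ 2 = (t^2)^2 * (norm (fst p) ^ 4 + norm (snd p) ^ 2)"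
    by (simp add: dil_def power_mult_distrib algebra_simps power_mult[symmetric])
  then show ?thesis unfolding GG_def by (simp only: real_sqrt_mult real_sqrt_abs) simp
qed

lemma GG_cont: "continuous_on UNIV GG"
  unfolding GG_def by (intro continuous_intros)

lemma GG_compact: "compact {p::('m::finite,'n::finite) cpt. GG p = 1}"
proof (rule compact_eq_bounded_closed[THEN iffD2], rule conjI)
  show "closed {p::('m,'n) cpt. GG p = 1}"
    using continuous_closed_preimage_constant[OF GG_cont closed_UNIV, of 1] by simp
  show "bounded {p::('m,'n) cpt. GG p = 1}"
  proof (rule boundedI[of _ 2])
    fix p :: "('m,'n) cpt" assume "p \<in> {p. GG p = 1}"
    then have h: "GG p = 1" by simp
    have a: "norm (fst p) \<le> 1" using GG_fst[of p] h by (simp add: power_le_one_iff abs_le_square_iff[symmetric])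
    have b: "norm (snd p) \<le> 1" using GG_snd[of p] h by simp
    have "norm p \<le> norm (fst p) + norm (snd p)"
      by (metis norm_Pair prod.collapse norm_Pair_le) 
    then show "norm p \<le> 2" using a b by simp
  qed
qed

lemma GG_compare:
  fixes nrm :: "('m::finite,'n::finite) cpt \<Rightarrow> real"
  assumes "strongly_homogeneous_norm nrm"
  shows "\<exists>m M. 0 < m \<and> 0 < M \<and> (\<forall>p. m * GG p \<le> nrm p ^ 2 \<and> nrm p ^ 2 \<le> M * GG p)"
proof -
  have cont: "continuous_on UNIV nrm" and nn: "\<And>p. 0 \<le> nrm p"
    and hom: "\<And>t p. nrm (dil t p) = \<bar>t\<bar> * nrm p" and z: "\<And>p. nrm p = 0 \<longleftrightarrow> p = 0"
    using assms unfolding strongly_homogeneous_norm_def by auto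
  let ?S = "{p::('m,'n) cpt. GG p = 1}"
  obtain i :: 'n where True by blast
  have ne: "?S \<noteq> {}"
  proof -
    have "GG ((0::real^'m), axis i (1::real)) = 1" unfolding GG_def by simp
    then show ?thesis by blast
  qed
  have c2: "continuous_on ?S nrm" using cont continuous_on_subset by blast
  obtain p0 where p0: "p0 \<in> ?S" "\<And>y. y \<in> ?S \<Longrightarrow> nrm p0 \<le> nrm y"
    using continuous_attains_inf[OF GG_compact ne c2] by blast
  obtain p1 where p1: "p1 \<in> ?S" "\<And>y. y \<in> ?S \<Longrightarrow> nrm y \<le> nrm p1"
    using continuous_attains_sup[OF GG_compact ne c2] by blast
  have p0nz: "p0 \<noteq> 0" using p0(1) GG_zero[of p0] by auto
  then have m0: "nrm p0 > 0" using nn[of p0] z[of p0] by auto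
  have M0: "nrm p1 \<ge> nrm p0" using p1(2)[OF p0(1)] .
  have key: "nrm p0 ^ 2 * GG p \<le> nrm p ^ 2 \<and> nrm p ^ 2 \<le> nrm p1 ^ 2 * GG p" for p
  proof (cases "p = 0")
    case True then have "nrm p = 0" "GG p = 0" using z[of p] GG_zero[of p] by auto then show ?thesis by simp
  next
    case False
    then have g: "GG p > 0" using GG_zero[of p] GG_nonneg[of p] by simp
    define t where "t = sqrt (GG p)"
    have t: "t > 0" "t^2 = GG p" using g unfolding t_def by auto
    define s where "s = dil (1/t) p"
    have ps: "p = dil t s" unfolding s_def dil_def using t(1) by (cases p) (simp add: power_divide)
    have sS: "s \<in> ?S" unfolding s_def using t g by (simp add: GG_dil power_divide)
    have np: "nrm p ^ 2 = GG p * nrm s ^ 2" using ps hom[of t s] t by (simp add: power_mult_distrib)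
    have "nrm p0 ^ 2 \<le> nrm s ^ 2" using p0(2)[OF sS] m0 by (simp add: power_mono)
    moreover have "nrm s ^ 2 \<le> nrm p1 ^ 2" using p1(2)[OF sS] nn by (simp add: power_mono)
    ultimately show ?thesis using np g by (simp add: mult.commute mult_left_mono)
  qed
  show ?thesis
    apply (rule exI[of _ "nrm p0 ^ 2"], rule exI[of _ "nrm p1 ^ 2"])
    using key m0 M0 by auto
qed

lemma step2_facts:
  assumes "step2_bracket B"
  shows "bilinear B" "\<And>x y. B x y = - B y x" "\<And>x. B x x = 0"
proof -
  show bl: "bilinear B" and sk: "\<And>x y. B x y = - B y x" using assms unfolding step2_bracket_def by blast+
  fix x have h: "B x x = - B x x" by (rule sk)
  have "(2::real) *\<^sub>R B x x = B x x + B x x" by (simp add: scaleR_2)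
  also have "\<dots> = 0" using h by (metis add.right_inverse)
  finally show "B x x = 0" by simp
qed

lemma gmul_ginv_zero:
  assumes "step2_bracket B" "gmul B (ginv q) p = 0"
  shows "p = q"
proof -
  note f = step2_facts[OF assms(1)]
  have "fst p = fst q" using assms(2) unfolding gmul_def ginv_def by (simp add: zero_prod_def)
  moreover then have "snd p = snd q" using assms(2) f(1,3) unfolding gmul_def ginv_def
    by (simp add: zero_prod_def bilinear_lneg)
  ultimately show ?thesis by (simp add: prod_eq_iff)
qed


lemma gmul_L2:
  assumes "step2_bracket B"
  shows "gmul B (ginv (gmul B (ginv q) p2)) (gmul B (ginv q) p1) = gmul B (ginv p2) p1"
proof -
  note f = step2_facts[OF assms(1)]
  obtain a1 c1 a2 c2 aq cq where e: "p1 = (a1,c1)" "p2 = (a2,c2)" "q = (aq,cq)" by (cases p1, cases p2, cases q) auto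
  have s: "B a2 a1 = - B a1 a2" "B aq a1 = - B a1 aq" "B aq a2 = - B a2 aq" by (rule f(2))+
  show ?thesis unfolding e gmul_def ginv_def
    apply (simp add: bilinear_ladd[OF f(1)] bilinear_radd[OF f(1)] bilinear_lneg[OF f(1)] bilinear_rneg[OF f(1)] bilinear_lmul[OF f(1)] bilinear_rmul[OF f(1)] bilinear_lsub[OF f(1)] bilinear_rsub[OF f(1)] f(3))
    apply (simp add: s algebra_simps)
    done
qed


lemma gmul_L3:
  assumes "step2_bracket B"
  shows "fst (gmul B (ginv (gmul B (ginv p2) q)) (gmul B (ginv p1) q)) = - fst (gmul B (ginv p2) p1)
    \<and> snd (gmul B (ginv (gmul B (ginv p2) q)) (gmul B (ginv p1) q)) = - snd (gmul B (ginv p2) p1)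
        + B (fst (gmul B (ginv p2) p1)) (fst (gmul B (ginv q) p1))"
proof -
  note f = step2_facts[OF assms(1)]
  obtain a1 c1 a2 c2 aq cq where e: "p1 = (a1,c1)" "p2 = (a2,c2)" "q = (aq,cq)" by (cases p1, cases p2, cases q) auto
  have s: "B a2 a1 = - B a1 a2" "B aq a1 = - B a1 aq" "B aq a2 = - B a2 aq" by (rule f(2))+
  show ?thesis unfolding e gmul_def ginv_def
    apply (simp add: bilinear_ladd[OF f(1)] bilinear_radd[OF f(1)] bilinear_lneg[OF f(1)] bilinear_rneg[OF f(1)] bilinear_lmul[OF f(1)] bilinear_rmul[OF f(1)] bilinear_lsub[OF f(1)] bilinear_rsub[OF f(1)] f(3))
    apply (simp add: s algebra_simps)
    apply (simp add: vec_eq_iff algebra_simps)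
    done
qed



lemma conj_bound:
  fixes B :: "real^'m::finite \<Rightarrow> real^'m \<Rightarrow> real^'n::finite"
  assumes Cb: "\<And>x y. norm (B x y) \<le> Cb * norm x * norm y" "Cb > 0"
    and W: "fst W = - fst u" "snd W = - snd u + B (fst u) (fst P)"
    and k: "GG u \<le> k * GG P" "0 \<le> k"
  shows "GG W ^ 2 \<le> (3 * k + 2 * Cb^2) * GG u * GG P"
proof -
  define x where "x = norm (fst u)"
  define z where "z = norm (snd u)"
  define a where "a = norm (fst P)"
  define gu where "gu = GG u"
  define gp where "gp = GG P"
  have x2: "x^2 \<le> gu" unfolding x_def gu_def by (rule GG_fst)
  have z: "z \<le> gu" unfolding z_def gu_def by (rule GG_snd)
  have a2: "a^2 \<le> gp" unfolding a_def gp_def by (rule GG_fst)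
  have nn: "0 \<le> x" "0 \<le> z" "0 \<le> a" "0 \<le> gu" "0 \<le> gp" unfolding x_def z_def a_def gu_def gp_def
    by (auto simp: GG_nonneg)
  have kk: "gu \<le> k * gp" using k(1) unfolding gu_def gp_def .
  have GW: "GG W ^ 2 = x ^ 4 + norm (snd W) ^ 2"
    unfolding GG_def x_def using W(1) by simp
  have sW: "norm (snd W) \<le> z + Cb * x * a"
    using W(2) norm_triangle_ineq[of "- snd u" "B (fst u) (fst P)"] Cb(1)[of "fst u" "fst P"]
    unfolding x_def z_def a_def by simp
  have sW2: "norm (snd W) ^ 2 \<le> (z + Cb * x * a)^2"
    using sW by (simp add: power_mono)
  also have "\<dots> \<le> 2 * z^2 + 2 * Cb^2 * (x^2 * a^2)"
  proof -
    define t where "t = Cb * x * a"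
    have "(z + t)^2 = z^2 + 2*z*t + t^2" "(z - t)^2 = z^2 - 2*z*t + t^2"
      by (simp_all add: power2_sum power2_diff)
    moreover have "0 \<le> (z - t)^2" by simp
    moreover have "t^2 = Cb^2 * (x^2 * a^2)" unfolding t_def by (simp add: power_mult_distrib)
    ultimately show ?thesis unfolding t_def[symmetric] by linarith
  qed
  also have "\<dots> \<le> 2 * gu^2 + 2 * Cb^2 * (gu * gp)"
    using x2 a2 z nn by (intro add_mono mult_left_mono mult_mono power_mono) auto
  finally have A: "norm (snd W) ^ 2 \<le> 2 * gu^2 + 2 * Cb^2 * (gu * gp)" .
  have B4: "x ^ 4 \<le> gu ^ 2" using power_mono[OF x2, of 2] nn by (simp add: power_mult[symmetric])
  have gg: "gu ^ 2 \<le> k * gu * gp" using mult_left_mono[OF kk nn(4)] by (simp add: power2_eq_square algebra_simps)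
  have "GG W ^ 2 \<le> 3 * gu^2 + 2 * Cb^2 * (gu * gp)" using GW A B4 by linarith
  also have "\<dots> \<le> 3 * (k * gu * gp) + 2 * Cb^2 * (gu * gp)" using gg by linarith
  finally show ?thesis unfolding gu_def gp_def by (simp add: algebra_simps)
qed

lemma real_a:
  fixes \<rho> r e \<beta> :: real
  assumes "0 < r" "0 \<le> \<rho>" "\<rho> \<le> r" "0 \<le> \<beta>"
  shows "\<rho> powr \<beta> / r powr e \<le> \<rho> powr (\<beta>/2) / r powr (e - \<beta>/2)"
proof -
  have 1: "\<rho> powr \<beta> = \<rho> powr (\<beta>/2) * \<rho> powr (\<beta>/2)" by (simp add: powr_add[symmetric])
  have 2: "r powr e = r powr (\<beta>/2) * r powr (e - \<beta>/2)" by (simp add: powr_add[symmetric])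
  have 3: "\<rho> powr (\<beta>/2) \<le> r powr (\<beta>/2)" using assms by (intro powr_mono2) auto
  have p: "r powr (\<beta>/2) > 0" "r powr (e - \<beta>/2) > 0" using assms by auto
  have "\<rho> powr \<beta> / r powr e = (\<rho> powr (\<beta>/2) / r powr (\<beta>/2)) * (\<rho> powr (\<beta>/2) / r powr (e - \<beta>/2))"
    unfolding 1 2 by simp
  also have "\<dots> \<le> 1 * (\<rho> powr (\<beta>/2) / r powr (e - \<beta>/2))"
    using 3 p by (intro mult_right_mono) auto
  finally show ?thesis by simp
qed

lemma real_b:
  fixes \<rho> r e \<beta> w R A1 cc :: real
  assumes "0 < r" "0 \<le> \<rho>" "0 \<le> \<beta>" "0 \<le> w" "w^2 \<le> A1 * \<rho> * r" "0 < R" "cc * r^2 \<le> R^2" "0 < cc" "0 \<le> e"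
  shows "w powr \<beta> / R powr e \<le> A1 powr (\<beta>/2) / cc powr (e/2) * (\<rho> powr (\<beta>/2) / r powr (e - \<beta>/2))"
proof -
  have A1: "0 \<le> A1 * \<rho> * r" using assms(5) zero_le_power2[of w] by linarith
  have "w \<le> sqrt (A1 * \<rho> * r)" using assms(4,5) real_le_rsqrt by blast
  then have "w powr \<beta> \<le> sqrt (A1 * \<rho> * r) powr \<beta>" using assms by (intro powr_mono2) auto
  also have "\<dots> = (A1 * \<rho> * r) powr (\<beta>/2)"
    using A1 by (simp add: powr_half_sqrt[symmetric] powr_powr)
  also have "\<dots> = A1 powr (\<beta>/2) * \<rho> powr (\<beta>/2) * r powr (\<beta>/2)"
    using A1 assms by (simp add: powr_mult zero_le_mult_iff)
  finally have w: "w powr \<beta> \<le> A1 powr (\<beta>/2) * \<rho> powr (\<beta>/2) * r powr (\<beta>/2)" .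
  have "sqrt (cc * r^2) \<le> sqrt (R^2)" using assms(7) by (rule real_sqrt_le_mono)
  then have "sqrt cc * r \<le> R" using assms(1,6) by (simp add: real_sqrt_mult)
  then have "(sqrt cc * r) powr e \<le> R powr e" using assms by (intro powr_mono2) auto
  moreover have "(sqrt cc * r) powr e = cc powr (e/2) * r powr e"
    using assms by (simp add: powr_mult powr_half_sqrt[symmetric] powr_powr)
  ultimately have R: "cc powr (e/2) * r powr e \<le> R powr e" by simp
  have 2: "r powr e = r powr (\<beta>/2) * r powr (e - \<beta>/2)" by (simp add: powr_add[symmetric])
  have pos: "0 < cc powr (e/2) * r powr e" using assms by simp
  have "w powr \<beta> / R powr e \<le> (A1 powr (\<beta>/2) * \<rho> powr (\<beta>/2) * r powr (\<beta>/2)) / (cc powr (e/2) * r powr e)"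
    using w R pos by (intro frac_le) auto
  also have "\<dots> = A1 powr (\<beta>/2) / cc powr (e/2) * (\<rho> powr (\<beta>/2) / r powr (e - \<beta>/2))"
    unfolding 2 using assms by (simp add: field_simps)
  finally show ?thesis .
qed

lemma gmul_L4:
  assumes "step2_bracket B"
  shows "gmul B (ginv p1) q = ginv (gmul B (ginv q) p1)"
proof -
  note f = step2_facts[OF assms(1)]
  obtain a1 c1 aq cq where e: "p1 = (a1,c1)" "q = (aq,cq)" by (cases p1, cases q) auto
  have s: "B aq a1 = - B a1 aq" by (rule f(2))
  show ?thesis unfolding e gmul_def ginv_def
    apply (simp add: bilinear_ladd[OF f(1)] bilinear_radd[OF f(1)] bilinear_lneg[OF f(1)] bilinear_rneg[OF f(1)] bilinear_lmul[OF f(1)] bilinear_rmul[OF f(1)] bilinear_lsub[OF f(1)] bilinear_rsub[OF f(1)] f(3))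
    apply (simp add: s algebra_simps)
    done
qed



lemma GG_ginv: "GG (ginv p) = GG p" unfolding GG_def ginv_def by simp

theorem lemma2p16:
  fixes B :: "real^'m \<Rightarrow> real^'m \<Rightarrow> real^'n"
    and nrm :: "('m,'n) cpt \<Rightarrow> real"
    and K :: "('m,'n) cpt \<Rightarrow> real^'d"
    and \<kappa> \<beta> :: real
  assumes "step2_bracket B"
    and "strongly_homogeneous_norm nrm"
    and "CZ_kernel B nrm (hdim TYPE(('m,'n) cpt)) \<kappa> \<beta> K"
  shows "\<exists>C\<ge>1. \<exists>A. \<forall>q p1 p2. p1 \<noteq> q \<and> p2 \<noteq> q \<and> cdist B nrm p1 p2 \<le> cdist B nrm p1 q / C \<longrightarrow>
           norm (K (gmul B (ginv q) p1) - K (gmul B (ginv q) p2))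
             + norm (K (gmul B (ginv p1) q) - K (gmul B (ginv p2) q))
           \<le> A * nrm (gmul B (ginv p2) p1) powr (\<beta>/2)
               / nrm (gmul B (ginv q) p1) powr (hdim TYPE(('m,'n) cpt) - 1 + \<beta>/2)"
proof -
  define Q where "Q = hdim TYPE(('m,'n) cpt)"
  have Q: "Q \<ge> 2" unfolding Q_def hdim_def
  proof -
    have "0 < CARD('n)" "0 < CARD('m)" by (simp_all add: card_gt_0_iff)
    then show "2 \<le> real CARD('m) + 2 * real CARD('n)" by linarith
  qed
  have nn: "\<And>p. 0 \<le> nrm p" and z: "\<And>p. nrm p = 0 \<longleftrightarrow> p = 0"
    using assms(2) unfolding strongly_homogeneous_norm_def by auto
  obtain CK where kap: "0 < \<kappa>" "\<kappa> < 1" and bet: "0 < \<beta>" "\<beta> \<le> 1" and CK: "CK \<ge> 1"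
    and hol: "\<And>p1 p2. p1 \<noteq> 0 \<Longrightarrow> p2 \<noteq> 0 \<Longrightarrow> cdist B nrm p1 p2 \<le> \<kappa> * nrm p1 \<Longrightarrow>
           norm (K p1 - K p2) \<le> CK * nrm (gmul B (ginv p2) p1) powr \<beta> / nrm p1 powr (Q - 1 + \<beta>)"
    using assms(3) unfolding CZ_kernel_def Q_def by blast
  obtain m M where mM: "0 < m" "0 < M" "\<And>p. m * GG p \<le> nrm p ^ 2" "\<And>p. nrm p ^ 2 \<le> M * GG p"
    using GG_compare[OF assms(2)] by blast
  note f = step2_facts[OF assms(1)]
  obtain Cb where Cb: "Cb > 0" "\<And>x y. norm (B x y) \<le> Cb * norm x * norm y"
    using bilinear_bounded_pos[OF f(1)] by blast
  define k where "k = M / m"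
  define c2 where "c2 = 3 * k + 2 * Cb^2"
  define A1 where "A1 = M * sqrt c2 / m"
  define cc where "cc = m / M"
  define C where "C = max 1 (max (1/\<kappa>) (A1 / (\<kappa>^2 * cc)))"
  define A where "A = CK + CK * (A1 powr (\<beta>/2) / cc powr ((Q - 1 + \<beta>)/2))"
  have k: "k > 0" unfolding k_def using mM by simp
  have c2: "c2 > 0" unfolding c2_def using k Cb by (simp add: add_pos_nonneg)
  have A1: "A1 > 0" unfolding A1_def using c2 mM by simp
  have cc: "cc > 0" unfolding cc_def using mM by simp
  have C1: "C \<ge> 1" "C \<ge> 1/\<kappa>" "C \<ge> A1 / (\<kappa>^2 * cc)" unfolding C_def by auto
  have main: "norm (K (gmul B (ginv q) p1) - K (gmul B (ginv q) p2))
             + norm (K (gmul B (ginv p1) q) - K (gmul B (ginv p2) q))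
           \<le> A * nrm (gmul B (ginv p2) p1) powr (\<beta>/2)
               / nrm (gmul B (ginv q) p1) powr (Q - 1 + \<beta>/2)"
    if h: "p1 \<noteq> q" "p2 \<noteq> q" "cdist B nrm p1 p2 \<le> cdist B nrm p1 q / C" for q p1 p2
  proof -
    define P1 where "P1 = gmul B (ginv q) p1"
    define P2 where "P2 = gmul B (ginv q) p2"
    define u where "u = gmul B (ginv p2) p1"
    define R1 where "R1 = gmul B (ginv p1) q"
    define R2 where "R2 = gmul B (ginv p2) q"
    define W where "W = gmul B (ginv R2) R1"
    define r where "r = nrm P1"
    define \<rho> where "\<rho> = nrm u"
    have P1: "P1 \<noteq> 0" unfolding P1_def using gmul_ginv_zero[OF assms(1)] h(1) by blast
    have P2: "P2 \<noteq> 0" unfolding P2_def using gmul_ginv_zero[OF assms(1)] h(2) by blast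
    have R1: "R1 \<noteq> 0" unfolding R1_def using gmul_ginv_zero[OF assms(1), of p1 q] h(1) by auto
    have R2: "R2 \<noteq> 0" unfolding R2_def using gmul_ginv_zero[OF assms(1), of p2 q] h(2) by auto
    have r: "r > 0" unfolding r_def using P1 nn[of P1] z[of P1] by auto
    have rho0: "\<rho> \<ge> 0" unfolding \<rho>_def by (rule nn)
    have rhoC: "\<rho> \<le> r / C" using h(3) unfolding \<rho>_def r_def u_def P1_def cdist_def .
    have rhoC': "\<rho> * C \<le> r" using rhoC C1 by (simp add: pos_le_divide_eq)
    have rr: "\<rho> \<le> r" using rhoC' mult_left_mono[OF C1(1) rho0] by linarith
    have rk: "\<rho> \<le> \<kappa> * r"
    proof -
      have "r / C \<le> r / (1/\<kappa>)" using C1 r kap by (intro divide_left_mono) auto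
      then show ?thesis using rhoC by (simp add: mult.commute)
    qed
    have L2: "gmul B (ginv P2) P1 = u" unfolding P1_def P2_def u_def by (rule gmul_L2[OF assms(1)])
    have T1: "norm (K P1 - K P2) \<le> CK * \<rho> powr \<beta> / r powr (Q - 1 + \<beta>)"
      using hol[OF P1 P2] rk unfolding cdist_def L2 r_def \<rho>_def by simp
    have T1': "norm (K P1 - K P2) \<le> CK * (\<rho> powr (\<beta>/2) / r powr (Q - 1 + \<beta>/2))"
    proof -
      have "\<rho> powr \<beta> / r powr (Q - 1 + \<beta>) \<le> \<rho> powr (\<beta>/2) / r powr ((Q - 1 + \<beta>) - \<beta>/2)" (is "?LHS \<le> ?RHS")
        using real_a[OF r rho0 rr, of \<beta> "Q - 1 + \<beta>"] bet by simp
      then have "CK * ?LHS \<le> CK * ?RHS" using CK by (intro mult_left_mono) auto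
      moreover have "(Q - 1 + \<beta>) - \<beta>/2 = Q - 1 + \<beta>/2" by simp
      ultimately show ?thesis using T1 by simp
    qed
    note L3 = gmul_L3[OF assms(1), of p2 q p1]
    have Wf: "fst W = - fst u" "snd W = - snd u + B (fst u) (fst P1)"
      using L3 unfolding W_def R1_def R2_def u_def P1_def by auto
    have Gu: "m * GG u \<le> \<rho>^2" using mM(3)[of u] unfolding \<rho>_def .
    have GP: "m * GG P1 \<le> r^2" using mM(3)[of P1] unfolding r_def .
    have GP': "r^2 \<le> M * GG P1" using mM(4)[of P1] unfolding r_def .
    have "\<rho>^2 \<le> r^2" using rr rho0 by (simp add: power_mono)
    then have "m * GG u \<le> M * GG P1" using Gu GP' by linarith
    then have kk: "GG u \<le> k * GG P1" unfolding k_def using mM by (simp add: field_simps)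
    have GW: "GG W ^ 2 \<le> c2 * GG u * GG P1"
      using conj_bound[OF Cb(2) Cb(1) Wf kk] k unfolding c2_def by simp
    have "c2 * GG u * GG P1 \<le> c2 * (\<rho>^2 / m) * (r^2 / m)"
      using Gu GP mM c2 GG_nonneg[of u] GG_nonneg[of P1]
      by (intro mult_mono mult_left_mono) (auto simp: field_simps)
    also have "\<dots> = (sqrt c2 * \<rho> * r / m)^2" using c2 by (simp add: power_mult_distrib power_divide power2_eq_square)
    finally have sq: "GG W ^ 2 \<le> (sqrt c2 * \<rho> * r / m)^2" using GW by linarith
    have nn0: "0 \<le> sqrt c2 * \<rho> * r / m" using c2 rho0 r mM by simp
    have "GG W \<le> sqrt c2 * \<rho> * r / m" by (rule power2_le_imp_le[OF sq nn0])
    then have "M * GG W \<le> M * (sqrt c2 * \<rho> * r / m)" by (rule mult_left_mono) (use mM in simp)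
    moreover have "M * (sqrt c2 * \<rho> * r / m) = A1 * \<rho> * r" unfolding A1_def by simp
    ultimately have W2: "nrm W ^ 2 \<le> A1 * \<rho> * r" using mM(4)[of W] by linarith
    have L4: "R1 = ginv P1" unfolding R1_def P1_def by (rule gmul_L4[OF assms(1)])
    have R1n: "cc * r^2 \<le> nrm R1 ^ 2"
    proof -
      have "cc * r^2 \<le> cc * (M * GG P1)" using GP' cc by simp
      also have "\<dots> = m * GG R1" unfolding cc_def L4 GG_ginv using mM by simp
      also have "\<dots> \<le> nrm R1 ^ 2" by (rule mM(3))
      finally show ?thesis .
    qed
    have R1p: "nrm R1 > 0" using R1 nn[of R1] z[of R1] by auto
    have Wk: "nrm W \<le> \<kappa> * nrm R1"
    proof -
      have "nrm W ^ 2 \<le> A1 * \<rho> * r" by (rule W2)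
      also have "\<dots> \<le> A1 * (r / C) * r" using rhoC A1 r by (intro mult_right_mono mult_left_mono) auto
      also have "\<dots> \<le> \<kappa>^2 * cc * r^2"
      proof -
        have "A1 / C \<le> \<kappa>^2 * cc" using C1(3) C1(1) kap cc A1
        proof -
          have pc: "0 < \<kappa>^2 * cc" using kap cc by simp
          have "A1 \<le> C * (\<kappa>^2 * cc)" using C1(3) pc by (simp add: divide_le_eq)
          then show ?thesis using C1(1) by (simp add: divide_le_eq mult.commute)
        qed
        then have "A1 / C * r^2 \<le> \<kappa>^2 * cc * r^2" using r by (intro mult_right_mono) auto
        then show ?thesis by (simp add: power2_eq_square)
      qed
      also have "\<dots> \<le> \<kappa>^2 * nrm R1 ^ 2" using R1n kap by (simp add: mult.assoc)
      also have "\<dots> = (\<kappa> * nrm R1)^2" by (simp add: power_mult_distrib)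
      finally have "nrm W ^ 2 \<le> (\<kappa> * nrm R1)^2" .
      then show ?thesis by (rule power2_le_imp_le) (use kap R1p in simp)
    qed
    have T2: "norm (K R1 - K R2) \<le> CK * nrm W powr \<beta> / nrm R1 powr (Q - 1 + \<beta>)"
      using hol[OF R1 R2] Wk unfolding cdist_def W_def by simp
    have T2': "norm (K R1 - K R2) \<le> CK * (A1 powr (\<beta>/2) / cc powr ((Q - 1 + \<beta>)/2) * (\<rho> powr (\<beta>/2) / r powr (Q - 1 + \<beta>/2)))"
    proof -
      have "nrm W powr \<beta> / nrm R1 powr (Q - 1 + \<beta>) \<le> A1 powr (\<beta>/2) / cc powr ((Q - 1 + \<beta>)/2) * (\<rho> powr (\<beta>/2) / r powr ((Q - 1 + \<beta>) - \<beta>/2))" (is "?LHS \<le> ?RHS")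
        using Q bet by (intro real_b[OF r rho0 _ nn W2 R1p R1n cc]) auto
      then have "CK * ?LHS \<le> CK * ?RHS" using CK by (intro mult_left_mono) auto
      moreover have "(Q - 1 + \<beta>) - \<beta>/2 = Q - 1 + \<beta>/2" by simp
      ultimately show ?thesis using T2 by simp
    qed
    have "norm (K P1 - K P2) + norm (K R1 - K R2) \<le> A * (\<rho> powr (\<beta>/2) / r powr (Q - 1 + \<beta>/2))"
      using T1' T2' unfolding A_def by (simp add: algebra_simps)
    then show ?thesis unfolding P1_def P2_def R1_def R2_def r_def \<rho>_def u_def by simp
  qed
  show ?thesis
    apply (rule exI[of _ C], rule conjI[OF C1(1)], rule exI[of _ A])
    using main unfolding Q_def by blast
qed

end
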